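(* Let $k \ge 1$ be an integer and let $n > 1$. Let $\mathcal{R}$ be any deterministic algorithm that, given access to an unknown database only through the top-$k$ range-query interface described in the context, always outputs the tuple of the database with the smallest value of $A$. Then there exist a database $D$ of $n$ tuples over the single attribute $A$ and a system ranking function (that is, a rule for choosing which $k$ matching tuples are returned by each overflowing query) such that, on $D$, the algorithm $\mathcal{R}$ issues at least $n/k$ queries before it outputs the tuple with the smallest value of $A$. Equivalently, in the worst case, finding the top-ranked tuple on one attribute through a top-$k$ interface can require as many queries as it takes to retrieve all $n$ tuples.
   Context: A database $D$ is a finite set of tuples with a single ordinal (real-valued) attribute $A$ whose value domain is the open interval $(v_0, v_\infty)$ of the reals, $v_0 < v_\infty$. Distinct tuples have distinct $A$-values. An algorithm may access $D$ only by issuing queries of the form "SELECT * FROM $D$ WHERE $A \in (v_1, v_2)$" with $v_0 \le v_1 < v_2 \le v_\infty$. Let $R(q)$ denote the set of tuples whose $A$-value lies in $(v_1, v_2)$. If $|R(q)| \le k$ the interface returns all of $R(q)$. If $|R(q)| > k$ (the query "overflows") it returns some $k$ tuples of $R(q)$, chosen by a proprietary system ranking function about which the algorithm knows nothing. This choice is arbitrary and may depend on the previously issued queries. The cost of an algorithm is the number of queries it issues. *)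

theory Defs
  imports Main "HOL-Library.Extended_Real"
begin

text \<open>Tuples are identified with their (pairwise distinct) A-values, so a database
  is a finite set of reals lying in the open interval between v0 and vinf.\<close>

type_synonym query = "real \<times> real"
type_synonym history = "(query \<times> real set) list"

datatype action = Query real real | Output real

type_synonym algorithm = "history \<Rightarrow> action"

type_synonym ranking = "history \<Rightarrow> query \<Rightarrow> real set"

definition valid_db :: "real \<Rightarrow> real \<Rightarrow> real set \<Rightarrow> bool" where
  "valid_db v0 vinf D \<longleftrightarrow> finite D \<and> D \<subseteq> {v0<..<vinf}"

definition valid_query :: "real \<Rightarrow> real \<Rightarrow> query \<Rightarrow> bool" where
  "valid_query v0 vinf q \<longleftrightarrow> v0 \<le> fst q \<and> fst q < snd q \<and> snd q \<le> vinf"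

definition matching :: "real set \<Rightarrow> query \<Rightarrow> real set" where
  "matching D q = {t \<in> D. fst q < t \<and> t < snd q}"

definition valid_ranking :: "nat \<Rightarrow> real set \<Rightarrow> ranking \<Rightarrow> bool" where
  "valid_ranking k D rk \<longleftrightarrow>
     (\<forall>h q. card (matching D q) > k \<longrightarrow>
        rk h q \<subseteq> matching D q \<and> card (rk h q) = k)"

definition answer :: "nat \<Rightarrow> real set \<Rightarrow> ranking \<Rightarrow> history \<Rightarrow> query \<Rightarrow> real set" where
  "answer k D rk h q = (if card (matching D q) \<le> k then matching D q else rk h q)"

fun run :: "nat \<Rightarrow> algorithm \<Rightarrow> real set \<Rightarrow> ranking \<Rightarrow> nat \<Rightarrow> history" where
  "run k alg D rk 0 = []"
| "run k alg D rk (Suc m) =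
     (let h = run k alg D rk m in
      case alg h of
        Query a b \<Rightarrow> h @ [((a, b), answer k D rk h (a, b))]
      | Output t \<Rightarrow> h)"

definition correct_min_alg :: "real \<Rightarrow> real \<Rightarrow> nat \<Rightarrow> algorithm \<Rightarrow> bool" where
  "correct_min_alg v0 vinf k alg \<longleftrightarrow>
     (\<forall>D rk. valid_db v0 vinf D \<and> D \<noteq> {} \<and> valid_ranking k D rk \<longrightarrow>
        (\<forall>m a b. alg (run k alg D rk m) = Query a b \<longrightarrow> valid_query v0 vinf (a, b)) \<and>
        (\<exists>m. alg (run k alg D rk m) = Output (Min D)))"

end

theory Submission
  imports Defs
begin

locale adv =
  fixes v0 vinf :: real and k n :: nat and alg :: algorithm
  assumes v0v: "v0 < vinf" and k1: "1 \<le> k"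
begin

definition Rv :: "history \<Rightarrow> real set" where "Rv h = \<Union> (snd ` set h)"
definition eps :: "real \<Rightarrow> query \<Rightarrow> real" where
 "eps d q = min d (min (if v0 < fst q then fst q - v0 else d) (if v0 < snd q then snd q - v0 else d))"
definition dstep :: "real \<Rightarrow> query \<times> real set \<Rightarrow> real" where
 "dstep d x = eps d (fst x) / (real n + 2)"
definition del :: "history \<Rightarrow> real" where "del h = foldl dstep (vinf - v0) h"
definition Uc :: "history \<Rightarrow> nat" where "Uc h = n - card (Rv h)"
definition fresh :: "real \<Rightarrow> nat \<Rightarrow> real set" where
 "fresh e j = (\<lambda>i. v0 + e / (real i + 2)) ` {..<j}"
definition pick :: "real set \<Rightarrow> real set" where "pick M = (SOME S. S \<subseteq> M \<and> card S = k)"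
definition f :: "history \<Rightarrow> query \<Rightarrow> real set" where
 "f h q = (let M = matching (Rv h) q; e = eps (del h) q in
   if v0 < fst q then (if card M \<le> k then M else pick M)
   else if card M + Uc h \<le> k then M \<union> fresh e (Uc h)
   else if k \<le> card M then pick M
   else M \<union> fresh e (k - card M))"
primrec sim :: "nat \<Rightarrow> history" where
 "sim 0 = []"
| "sim (Suc m) = (case alg (sim m) of Query a b \<Rightarrow> sim m @ [((a, b), f (sim m) (a, b))] | Output t \<Rightarrow> sim m)"

definition Inv :: "history \<Rightarrow> bool" where
 "Inv h \<longleftrightarrow> finite (Rv h) \<and> card (Rv h) \<le> n \<and> 0 < del h \<and> del h \<le> vinf - v0 \<and>
    (\<forall>p\<in>Rv h. v0 + del h \<le> p \<and> p < vinf) \<and> card (Rv h) \<le> k * length h"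

lemma Rv_snoc[simp]: "Rv (h @ [(q, A)]) = Rv h \<union> A" by (auto simp: Rv_def)
lemma Rv_Nil[simp]: "Rv [] = {}" by (simp add: Rv_def)
lemma del_snoc[simp]: "del (h @ [(q,A)]) = eps (del h) q / (real n + 2)"
  by (simp add: del_def dstep_def)
lemma del_Nil[simp]: "del [] = vinf - v0" by (simp add: del_def)

lemma eps_pos: "0 < d \<Longrightarrow> 0 < eps d q" by (auto simp: eps_def)
lemma eps_le: "eps d q \<le> d" by (auto simp: eps_def)
lemma eps_le_a: "v0 < fst q \<Longrightarrow> eps d q \<le> fst q - v0" by (auto simp: eps_def)
lemma eps_le_b: "v0 < snd q \<Longrightarrow> eps d q \<le> snd q - v0" by (auto simp: eps_def)

lemma fresh_finite[simp]: "finite (fresh e j)" by (simp add: fresh_def)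
lemma fresh_card: "0 < e \<Longrightarrow> card (fresh e j) = j"
  unfolding fresh_def by (subst card_image) (auto simp: inj_on_def field_simps)
lemma fresh_bounds: "0 < e \<Longrightarrow> p \<in> fresh e j \<Longrightarrow> v0 < p \<and> p \<le> v0 + e / 2"
  by (auto simp: fresh_def field_simps)
lemma fresh_lt: "0 < e \<Longrightarrow> p \<in> fresh e j \<Longrightarrow> p < v0 + e"
  using fresh_bounds[of e p j] by auto
lemma fresh_lower: "0 < e \<Longrightarrow> p \<in> fresh e j \<Longrightarrow> j \<le> n \<Longrightarrow> v0 + e / (real n + 2) \<le> p"
  unfolding fresh_def
proof (clarsimp)
  fix i assume e: "0 < e" and i: "i < j" "j \<le> n"
  have "real i + 2 \<le> real n + 2" using i by simp
  then show "e / (real n + 2) \<le> e / (real i + 2)" using e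
    by (intro divide_left_mono) auto
qed
lemma fresh_mem: "1 \<le> j \<Longrightarrow> v0 + e / 2 \<in> fresh e j"
  by (auto simp: fresh_def image_iff intro!: bexI[of _ 0])

lemma pick: "finite M \<Longrightarrow> k \<le> card M \<Longrightarrow> pick M \<subseteq> M \<and> card (pick M) = k"
  unfolding pick_def by (rule someI_ex) (meson obtain_subset_with_card_n)


lemma matching_sub: "matching D q \<subseteq> D" by (auto simp: matching_def)
lemma matching_fin: "finite D \<Longrightarrow> finite (matching D q)" by (simp add: matching_def)

lemma f_cases:
  assumes fin: "finite (Rv h)"
  shows "f h q \<subseteq> Rv h \<or> (\<exists>j. j \<le> Uc h \<and> j \<le> k \<and>
           f h q = matching (Rv h) q \<union> fresh (eps (del h) q) j)"
proof -
  let ?M = "matching (Rv h) q"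
  have Mf: "finite ?M" "?M \<subseteq> Rv h" using fin by (auto simp: matching_fin matching_sub)
  show ?thesis
  proof (cases "v0 < fst q")
    case True
    have "f h q \<subseteq> ?M" using True Mf pick[of ?M] by (auto simp: f_def Let_def)
    then show ?thesis using Mf by blast
  next
    case False
    show ?thesis
    proof (cases "card ?M + Uc h \<le> k")
      case True
      then show ?thesis using False by (auto simp: f_def Let_def)
    next
      case c2: False
      show ?thesis
      proof (cases "k \<le> card ?M")
        case True
        have "f h q \<subseteq> ?M" using True False c2 Mf pick[of ?M] by (auto simp: f_def Let_def)
        then show ?thesis using Mf by blast
      next
        case c3: False
        have "f h q = ?M \<union> fresh (eps (del h) q) (k - card ?M)"
          using False c2 c3 by (simp add: f_def Let_def)
        moreover have "k - card ?M \<le> Uc h" using c2 by linarith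
        ultimately show ?thesis by auto
      qed
    qed
  qed
qed

lemma Inv_Nil: "Inv []" using v0v by (simp add: Inv_def)

lemma Inv_step:
  assumes I: "Inv h"
  shows "Inv (h @ [(q, f h q)])"
proof -
  let ?e = "eps (del h) q"
  have fin: "finite (Rv h)" and cn: "card (Rv h) \<le> n" and dp: "0 < del h"
    and dl: "del h \<le> vinf - v0" and pts: "\<forall>p\<in>Rv h. v0 + del h \<le> p \<and> p < vinf"
    and ck: "card (Rv h) \<le> k * length h" using I by (auto simp: Inv_def)
  have ep: "0 < ?e" using dp by (rule eps_pos)
  have el: "?e \<le> del h" by (rule eps_le)
  have dnew: "del (h @ [(q, f h q)]) = ?e / (real n + 2)" by simp
  have d1: "?e / (real n + 2) \<le> ?e" using ep by (simp add: divide_le_eq)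
  have d2: "0 < ?e / (real n + 2)" using ep by simp
  from f_cases[OF fin, of q] show ?thesis
  proof
    assume s: "f h q \<subseteq> Rv h"
    then have R: "Rv (h @ [(q, f h q)]) = Rv h" by auto
    show ?thesis unfolding Inv_def R dnew
      using fin cn dp dl pts ck d1 d2 el by (force simp: algebra_simps)
  next
    assume "\<exists>j. j \<le> Uc h \<and> j \<le> k \<and> f h q = matching (Rv h) q \<union> fresh ?e j"
    then obtain j where j: "j \<le> Uc h" "j \<le> k" and fe: "f h q = matching (Rv h) q \<union> fresh ?e j" by blast
    have R: "Rv (h @ [(q, f h q)]) = Rv h \<union> fresh ?e j"
      using fe matching_sub[of "Rv h" q] by auto
    have disj: "Rv h \<inter> fresh ?e j = {}"
    proof -
      { fix p assume p: "p \<in> Rv h" "p \<in> fresh ?e j"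
        have "p < v0 + ?e" using fresh_lt[OF ep p(2)] .
        moreover have "v0 + del h \<le> p" using pts p(1) by auto
        ultimately have False using el by linarith }
      then show ?thesis by blast
    qed
    have jn: "j \<le> n" using j cn by (simp add: Uc_def)
    have card: "card (Rv h \<union> fresh ?e j) = card (Rv h) + j"
      using card_Un_disjoint[OF fin fresh_finite disj] fresh_card[OF ep] by simp
    have c1: "card (Rv h) + j \<le> n" using j(1) cn by (simp add: Uc_def)
    have c2: "card (Rv h) + j \<le> k * length (h @ [(q, f h q)])" using ck j(2) by simp
    have p1: "\<forall>p\<in>Rv h \<union> fresh ?e j. v0 + ?e / (real n + 2) \<le> p \<and> p < vinf"
    proof
      fix p assume "p \<in> Rv h \<union> fresh ?e j"
      then show "v0 + ?e / (real n + 2) \<le> p \<and> p < vinf"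
      proof
        assume "p \<in> Rv h" then show ?thesis using pts d1 el by force
      next
        assume pf: "p \<in> fresh ?e j"
        show ?thesis using fresh_lower[OF ep pf jn] fresh_lt[OF ep pf] el dl by linarith
      qed
    qed
    show ?thesis unfolding Inv_def R dnew card using fin c1 c2 d2 d1 el dl p1 by auto
  qed
qed

lemma Inv_sim: "Inv (sim m)"
  by (induction m) (auto simp: Inv_Nil Inv_step split: action.split)


lemma new_pts:
  assumes I: "Inv h"
  shows "Rv (h @ [(q, f h q)]) - Rv h \<subseteq> {p. v0 < p \<and> p < v0 + eps (del h) q}"
proof -
  have fin: "finite (Rv h)" and dp: "0 < del h" using I by (auto simp: Inv_def)
  have ep: "0 < eps (del h) q" using dp by (rule eps_pos)
  from f_cases[OF fin, of q] show ?thesis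
  proof
    assume "f h q \<subseteq> Rv h" then show ?thesis by auto
  next
    assume "\<exists>j. j \<le> Uc h \<and> j \<le> k \<and> f h q = matching (Rv h) q \<union> fresh (eps (del h) q) j"
    then obtain j where fe: "f h q = matching (Rv h) q \<union> fresh (eps (del h) q) j" by blast
    show ?thesis using fe matching_sub[of "Rv h" q] fresh_bounds[OF ep] fresh_lt[OF ep] by fastforce
  qed
qed

lemma sim_step_cases: "sim (Suc m) = sim m \<or> (\<exists>a b. alg (sim m) = Query a b \<and>
    sim (Suc m) = sim m @ [((a, b), f (sim m) (a, b))])"
  by (cases "alg (sim m)") auto

lemma del_step: "del (sim (Suc m)) \<le> del (sim m)"
proof -
  have dp: "0 < del (sim m)" using Inv_sim[of m] by (simp add: Inv_def)
  { fix q A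
    have "eps (del (sim m)) q / (real n + 2) \<le> eps (del (sim m)) q"
      using eps_pos[OF dp, of q] by (simp add: divide_le_eq)
    also have "\<dots> \<le> del (sim m)" by (rule eps_le)
    finally have "del (sim m @ [(q, A)]) \<le> del (sim m)" by simp }
  then show ?thesis using sim_step_cases[of m] by auto
qed

lemma mono_sim: "Rv (sim m) \<subseteq> Rv (sim (m + d)) \<and> del (sim (m + d)) \<le> del (sim m) \<and>
   length (sim m) \<le> length (sim (m + d))"
proof (induction d)
  case 0 then show ?case by simp
next
  case (Suc d)
  have "Rv (sim (m + d)) \<subseteq> Rv (sim (Suc (m + d)))" "length (sim (m + d)) \<le> length (sim (Suc (m + d)))"
    using sim_step_cases[of "m + d"] by auto
  then show ?case using Suc del_step[of "m + d"] by auto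
qed

lemma later:
  "Rv (sim (m + d)) - Rv (sim m) \<subseteq> {p. v0 < p \<and> p < v0 + del (sim m)}"
proof (induction d)
  case 0 then show ?case by simp
next
  case (Suc d)
  have "Rv (sim (Suc (m + d))) - Rv (sim (m + d)) \<subseteq> {p. v0 < p \<and> p < v0 + del (sim m)}"
  proof -
    have dd: "del (sim (m + d)) \<le> del (sim m)" using mono_sim[of m d] by simp
    from sim_step_cases[of "m + d"] show ?thesis
    proof
      assume "sim (Suc (m + d)) = sim (m + d)" then show ?thesis by simp
    next
      assume "\<exists>a b. alg (sim (m + d)) = Query a b \<and>
        sim (Suc (m + d)) = sim (m + d) @ [((a, b), f (sim (m + d)) (a, b))]"
      then obtain a b where e: "sim (Suc (m + d)) = sim (m + d) @ [((a, b), f (sim (m + d)) (a, b))]"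
        by blast
      have "eps (del (sim (m + d))) (a, b) \<le> del (sim m)" using eps_le dd order_trans by blast
      then show ?thesis using new_pts[OF Inv_sim[of "m + d"], of "(a, b)"] e by fastforce
    qed
  qed
  then show ?case using Suc by auto
qed

definition Dd :: "nat \<Rightarrow> real \<Rightarrow> real set" where
  "Dd T e = Rv (sim T) \<union> fresh e (Uc (sim T))"

lemma Dd_props:
  assumes e: "0 < e" "e \<le> del (sim T)"
  shows "finite (Dd T e)" "card (Dd T e) = n" "valid_db v0 vinf (Dd T e)"
    "Rv (sim T) \<inter> fresh e (Uc (sim T)) = {}"
proof -
  have I: "Inv (sim T)" by (rule Inv_sim)
  then have fin: "finite (Rv (sim T))" and cn: "card (Rv (sim T)) \<le> n"
    and dl: "del (sim T) \<le> vinf - v0" and pts: "\<forall>p\<in>Rv (sim T). v0 + del (sim T) \<le> p \<and> p < vinf"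
    and dp: "0 < del (sim T)" by (auto simp: Inv_def)
  show disj: "Rv (sim T) \<inter> fresh e (Uc (sim T)) = {}"
    using pts fresh_lt[OF e(1)] e(2) by fastforce
  show "finite (Dd T e)" using fin by (simp add: Dd_def)
  show "card (Dd T e) = n" unfolding Dd_def
    using card_Un_disjoint[OF fin fresh_finite disj] fresh_card[OF e(1)] cn by (simp add: Uc_def)
  show "valid_db v0 vinf (Dd T e)" unfolding valid_db_def Dd_def
    using fin pts dp fresh_bounds[OF e(1)] fresh_lt[OF e(1)] e(2) dl by fastforce
qed

lemma query_later:
  assumes e: "0 < e" "e \<le> del (sim T)" and mT: "m < T" and q: "alg (sim m) = Query a b"
  shows "Dd T e - Rv (sim m) \<subseteq> {p. v0 < p \<and> p < v0 + eps (del (sim m)) (a, b)}"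
proof -
  let ?E = "eps (del (sim m)) (a, b)"
  have s1: "sim (Suc m) = sim m @ [((a, b), f (sim m) (a, b))]" using q by simp
  have A: "Rv (sim (Suc m)) - Rv (sim m) \<subseteq> {p. v0 < p \<and> p < v0 + ?E}"
    using new_pts[OF Inv_sim[of m], of "(a,b)"] s1 by simp
  have dS: "del (sim (Suc m)) \<le> ?E"
  proof -
    have "0 < ?E" using Inv_sim[of m] eps_pos by (simp add: Inv_def)
    then show ?thesis using s1 by (simp add: divide_le_eq)
  qed
  obtain d where Td: "T = Suc m + d" using mT less_iff_Suc_add by auto
  have B: "Rv (sim T) - Rv (sim (Suc m)) \<subseteq> {p. v0 < p \<and> p < v0 + ?E}"
    using later[of "Suc m" d] dS Td by fastforce
  have C: "fresh e (Uc (sim T)) \<subseteq> {p. v0 < p \<and> p < v0 + ?E}"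
    using fresh_bounds[OF e(1)] fresh_lt[OF e(1)] e(2) mono_sim[of "Suc m" d] dS Td by fastforce
  show ?thesis using A B C unfolding Dd_def by blast
qed


definition rkd :: "real set \<Rightarrow> ranking" where
  "rkd D h q = (if f h q \<subseteq> matching D q \<and> card (f h q) = k then f h q else pick (matching D q))"

lemma rkd_valid: "finite D \<Longrightarrow> valid_ranking k D (rkd D)"
  unfolding valid_ranking_def rkd_def using pick matching_fin by auto

lemma answer_ok:
  assumes e: "0 < e" "e \<le> del (sim T)" and mT: "m < T" and q: "alg (sim m) = Query a b"
    and vq: "valid_query v0 vinf (a, b)"
  shows "answer k (Dd T e) (rkd (Dd T e)) (sim m) (a, b) = f (sim m) (a, b)"
proof -
  define h where "h = sim m"
  define D where "D = Dd T e"
  define M where "M = matching (Rv h) (a, b)"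
  define L where "L = D - Rv h"
  define E where "E = eps (del h) (a, b)"
  have I: "Inv h" unfolding h_def by (rule Inv_sim)
  then have fin: "finite (Rv h)" and pts: "\<forall>p\<in>Rv h. v0 + del h \<le> p" and dp: "0 < del h"
    by (auto simp: Inv_def)
  have Ep: "0 < E" unfolding E_def using dp by (rule eps_pos)
  have Ed: "E \<le> del h" unfolding E_def by (rule eps_le)
  obtain d where Td: "T = m + d" using mT by (metis less_imp_add_positive)
  have RD: "Rv h \<subseteq> D" unfolding h_def D_def Dd_def using mono_sim[of m d] Td by auto
  have Dfin: "finite D" and Dc: "card D = n" unfolding D_def using Dd_props[OF e] by auto
  have Lc: "card L = Uc h" unfolding L_def Uc_def using card_Diff_subset[OF fin RD] Dc by simp
  have Lfin: "finite L" using Dfin by (simp add: L_def)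
  have Lb: "L \<subseteq> {p. v0 < p \<and> p < v0 + E}"
    unfolding L_def D_def h_def E_def using query_later[OF e mT q] .
  have Mf: "finite M" "M \<subseteq> Rv h" unfolding M_def using fin by (auto simp: matching_fin matching_sub)
  have MLdisj: "M \<inter> L = {}" using Mf(2) by (auto simp: L_def)
  have va: "v0 \<le> a" "a < b" using vq by (auto simp: valid_query_def)
  have fL: "fresh E j \<subseteq> L" if "f h (a,b) = M \<union> fresh E j" for j
  proof -
    have s1: "sim (Suc m) = h @ [((a, b), f h (a, b))]" using q by (simp add: h_def)
    obtain d' where Td': "T = Suc m + d'" using mT less_iff_Suc_add by auto
    have "fresh E j \<subseteq> Rv (sim (Suc m))" using s1 that by auto
    also have "\<dots> \<subseteq> D" unfolding D_def Dd_def using mono_sim[of "Suc m" d'] Td' by auto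
    finally have "fresh E j \<subseteq> D" .
    moreover have "fresh E j \<inter> Rv h = {}" using pts fresh_lt[OF Ep] Ed by fastforce
    ultimately show ?thesis unfolding L_def by blast
  qed
  have goal: "answer k D (rkd D) h (a, b) = f h (a, b)"
  proof (cases "v0 < a")
    case True
    have mD: "matching D (a, b) = M"
    proof -
      { fix p assume p: "p \<in> D" "a < p" "p < b"
        have "p \<in> Rv h"
        proof (rule ccontr)
          assume "p \<notin> Rv h"
          then have "p \<in> L" using p by (simp add: L_def)
          then have "p < v0 + E" using Lb by auto
          moreover have "E \<le> a - v0" unfolding E_def using eps_le_a[of "(a,b)"] True by simp
          ultimately show False using p by linarith
        qed }
      then show ?thesis unfolding M_def matching_def using RD by auto
    qed
    show ?thesis
    proof (cases "card M \<le> k")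
      case c: True
      have "f h (a, b) = M" using True c by (simp add: f_def Let_def M_def)
      then show ?thesis using c mD by (simp add: answer_def)
    next
      case c: False
      have fe: "f h (a, b) = pick M" using True c by (simp add: f_def Let_def M_def)
      have "pick M \<subseteq> M \<and> card (pick M) = k" using pick[OF Mf(1)] c by simp
      then show ?thesis using c mD fe by (simp add: answer_def rkd_def)
    qed
  next
    case False
    have mD: "matching D (a, b) = M \<union> L"
    proof -
      have bE: "E \<le> b - v0" unfolding E_def using eps_le_b[of "(a,b)"] va by simp
      have "a = v0" using False va by simp
      then have "L \<subseteq> matching D (a, b)" using Lb bE by (auto simp: matching_def L_def)
      moreover have "M \<subseteq> matching D (a, b)" using RD by (auto simp: M_def matching_def)
      moreover have "matching D (a, b) \<subseteq> M \<union> L" by (auto simp: M_def matching_def L_def)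
      ultimately show ?thesis by blast
    qed
    have cmD: "card (matching D (a, b)) = card M + Uc h"
      using mD card_Un_disjoint[OF Mf(1) Lfin MLdisj] Lc by simp
    show ?thesis
    proof (cases "card M + Uc h \<le> k")
      case c: True
      have fe: "f h (a, b) = M \<union> fresh E (Uc h)" using False c by (simp add: f_def Let_def M_def E_def)
      have "fresh E (Uc h) \<subseteq> L" using fL fe by blast
      moreover have "card (fresh E (Uc h)) = card L" using fresh_card[OF Ep] Lc by simp
      ultimately have "fresh E (Uc h) = L" using Lfin by (simp add: card_subset_eq)
      then show ?thesis using fe mD cmD c by (simp add: answer_def)
    next
      case c: False
      have ans: "answer k D (rkd D) h (a, b) = rkd D h (a, b)" using cmD c by (simp add: answer_def)
      have "f h (a, b) \<subseteq> matching D (a, b) \<and> card (f h (a, b)) = k"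
      proof (cases "k \<le> card M")
        case c2: True
        have fe: "f h (a, b) = pick M" using False c c2 by (simp add: f_def Let_def M_def)
        then show ?thesis using pick[OF Mf(1) c2] mD by auto
      next
        case c2: False
        have fe: "f h (a, b) = M \<union> fresh E (k - card M)" using False c c2 by (simp add: f_def Let_def M_def E_def)
        have sub: "fresh E (k - card M) \<subseteq> L" using fL fe by blast
        have "M \<inter> fresh E (k - card M) = {}" using MLdisj sub by blast
        then have "card (f h (a, b)) = card M + (k - card M)"
          using fe card_Un_disjoint[OF Mf(1) fresh_finite] fresh_card[OF Ep] by simp
        then show ?thesis using fe sub mD c2 by auto
      qed
      then show ?thesis using ans by (simp add: rkd_def)
    qed
  qed
  then show ?thesis by (simp add: h_def D_def)
qed


lemma agree:
  assumes cor: "correct_min_alg v0 vinf k alg" and e: "0 < e" "e \<le> del (sim T)" and n1: "1 \<le> n"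
  shows "m \<le> T \<Longrightarrow> run k alg (Dd T e) (rkd (Dd T e)) m = sim m"
proof (induction m)
  case 0 then show ?case by simp
next
  case (Suc m)
  let ?D = "Dd T e"
  have vD: "valid_db v0 vinf ?D" and fD: "finite ?D" and cD: "card ?D = n" using Dd_props[OF e] by auto
  have ne: "?D \<noteq> {}" using cD n1 by auto
  have Q: "\<forall>m a b. alg (run k alg ?D (rkd ?D) m) = Query a b \<longrightarrow> valid_query v0 vinf (a, b)"
    using cor vD ne rkd_valid[OF fD] unfolding correct_min_alg_def by blast
  have IH: "run k alg ?D (rkd ?D) m = sim m" using Suc by simp
  show ?case
  proof (cases "alg (sim m)")
    case (Query a b)
    have "valid_query v0 vinf (a, b)" using Q IH Query by metis
    then have "answer k ?D (rkd ?D) (sim m) (a, b) = f (sim m) (a, b)"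
      using answer_ok[OF e _ Query] Suc by simp
    then show ?thesis using IH Query by (simp add: Let_def)
  next
    case (Output t) then show ?thesis using IH by simp
  qed
qed

end

lemma run_stable:
  assumes "alg (run k alg D rk m) = Output t"
  shows "run k alg D rk (m + d) = run k alg D rk m"
  by (induction d) (use assms in auto)

lemma run_len_mono: "length (run k alg D rk m) \<le> length (run k alg D rk (m + d))"
proof (induction d)
  case 0 then show ?case by simp
next
  case (Suc d) then show ?case by (auto simp: Let_def split: action.split)
qed


context adv begin

lemma main:
  assumes n1: "n > 1" and cor: "correct_min_alg v0 vinf k alg"
  shows "\<exists>D rk. valid_db v0 vinf D \<and> card D = n \<and> valid_ranking k D rk \<and>
           (\<exists>m. alg (run k alg D rk m) = Output (Min D) \<and>
                real (length (run k alg D rk m)) \<ge> real n / real k)"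
proof (cases "\<exists>T. real (length (sim T)) \<ge> real n / real k")
  case True
  then obtain T where T: "real (length (sim T)) \<ge> real n / real k" by blast
  define e where "e = del (sim T)"
  have e: "0 < e" "e \<le> del (sim T)" using Inv_sim[of T] by (auto simp: e_def Inv_def)
  define D where "D = Dd T e"
  have vD: "valid_db v0 vinf D" and fD: "finite D" and cD: "card D = n"
    using Dd_props[OF e] by (auto simp: D_def)
  have ne: "D \<noteq> {}" using cD n1 by auto
  have vr: "valid_ranking k D (rkd D)" using rkd_valid[OF fD] .
  obtain m' where m': "alg (run k alg D (rkd D) m') = Output (Min D)"
    using cor vD ne vr unfolding correct_min_alg_def by blast
  define m'' where "m'' = max m' T"
  have r1: "run k alg D (rkd D) m'' = run k alg D (rkd D) m'"
    using run_stable[of alg k D "rkd D" m' "Min D" "m'' - m'", OF m'] by (simp add: m''_def)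
  have rT: "run k alg D (rkd D) T = sim T" using agree[OF cor e, of T] n1 by (simp add: D_def)
  have "length (run k alg D (rkd D) T) \<le> length (run k alg D (rkd D) m'')"
    using run_len_mono[of k alg D "rkd D" T "m'' - T"] by (simp add: m''_def)
  then have "real (length (run k alg D (rkd D) m'')) \<ge> real n / real k" using T rT by simp
  then show ?thesis using vD cD vr m' r1 by metis
next
  case False
  then have lt: "\<And>T. real (length (sim T)) < real n / real k" by (simp add: not_le)
  have "\<exists>T0 t. alg (sim T0) = Output t"
  proof (rule ccontr)
    assume "\<not> ?thesis"
    then have allq: "\<And>m. \<exists>a b. alg (sim m) = Query a b" by (metis action.exhaust)
    have "length (sim m) = m" for m
    proof (induction m)
      case 0 then show ?case by simp
    next
      case (Suc m)
      obtain a b where "alg (sim m) = Query a b" using allq by blast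
      then show ?case using Suc by simp
    qed
    then have "real n < real n / real k" using lt[of n] by simp
    moreover have "real n / real k \<le> real n" using k1 by (simp add: divide_le_eq mult_le_cancel_left1)
    ultimately show False by simp
  qed
  then obtain T0 t where out: "alg (sim T0) = Output t" by blast
  let ?h = "sim T0"
  have I: "Inv ?h" by (rule Inv_sim)
  have ck: "card (Rv ?h) \<le> k * length ?h" and fin: "finite (Rv ?h)"
    and pts: "\<forall>p\<in>Rv ?h. v0 + del ?h \<le> p" and dp: "0 < del ?h" using I by (auto simp: Inv_def)
  have "real (length ?h) * real k < real n"
    using lt[of T0] k1 by (simp add: less_divide_eq)
  then have "k * length ?h < n" by (metis of_nat_less_iff of_nat_mult mult.commute)
  then have U1: "1 \<le> Uc ?h" using ck by (simp add: Uc_def)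
  define e where "e = (if v0 < t then min (del ?h) (t - v0) else del ?h)"
  have e: "0 < e" "e \<le> del (sim T0)" using dp by (auto simp: e_def)
  define D where "D = Dd T0 e"
  have vD: "valid_db v0 vinf D" and fD: "finite D" and cD: "card D = n"
    using Dd_props[OF e] by (auto simp: D_def)
  have ne: "D \<noteq> {}" using cD n1 by auto
  have vr: "valid_ranking k D (rkd D)" using rkd_valid[OF fD] .
  obtain m' where m': "alg (run k alg D (rkd D) m') = Output (Min D)"
    using cor vD ne vr unfolding correct_min_alg_def by blast
  have rT: "run k alg D (rkd D) T0 = ?h" using agree[OF cor e, of T0] n1 by (simp add: D_def)
  then have out': "alg (run k alg D (rkd D) T0) = Output t" using out by simp
  define m'' where "m'' = max m' T0"
  have "run k alg D (rkd D) m'' = run k alg D (rkd D) m'"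
    using run_stable[of alg k D "rkd D" m' "Min D" "m'' - m'", OF m'] by (simp add: m''_def)
  moreover have "run k alg D (rkd D) m'' = run k alg D (rkd D) T0"
    using run_stable[of alg k D "rkd D" T0 t "m'' - T0", OF out'] by (simp add: m''_def)
  ultimately have tmin: "t = Min D" using m' out' by simp
  have p0: "v0 + e / 2 \<in> D" using fresh_mem[OF U1] by (simp add: D_def Dd_def)
  have "Min D \<le> v0 + e / 2" using Min_le[OF fD p0] .
  then have tle: "t < v0 + e" using e(1) tmin by simp
  have tD: "t \<in> D" using tmin fD ne by simp
  show ?thesis
  proof (cases "t \<in> Rv ?h")
    case True
    then have "v0 + del ?h \<le> t" using pts by auto
    then show ?thesis using tle e(2) by simp
  next
    case False
    then have "t \<in> fresh e (Uc ?h)" using tD by (simp add: D_def Dd_def)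
    then have "v0 < t" using fresh_bounds[OF e(1)] by blast
    then have "e \<le> t - v0" by (simp add: e_def)
    then show ?thesis using tle by simp
  qed
qed

end


theorem theorem1:
  fixes v0 vinf :: real and k n :: nat and alg :: algorithm
  assumes "v0 < vinf" and "k \<ge> 1" and "n > 1"
    and "correct_min_alg v0 vinf k alg"
  shows "\<exists>D rk. valid_db v0 vinf D \<and> card D = n \<and> valid_ranking k D rk \<and>
           (\<exists>m. alg (run k alg D rk m) = Output (Min D) \<and>
                real (length (run k alg D rk m)) \<ge> real n / real k)"
proof -
  interpret adv v0 vinf k n alg using assms by unfold_locales auto
  show ?thesis using main assms by blast
qed

end
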